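(* Suppose Algorithm MC is run on $b$ with $|b_j(v)|\le\deg(v)$ for all $v,j$, with $\alpha\in(0,1/4]$ and $T$ satisfying $\alpha^2T\ge\ln(2nk+5Tkn^2)$, and completes all $T$ rounds without terminating in step (4). Then $|b_j(v)-(B\bar f_j)_v|\le5\alpha\deg(v)$ for all $v\in V$ and $j\in[k]$.
   Context: Let $G=(V,E)$ be a unit-capacity undirected graph, $n=|V|\ge3$, every vertex of degree $\deg(v)\ge1$, each edge with a fixed arbitrary orientation; $B\in\mathbb R^{V\times E}$ is the incidence matrix (column $(u,v)$ has $+1$ in row $u$, $-1$ in row $v$, $0$ elsewhere). Algorithm MC takes $k\ge1$, $b=(b_1,\dots,b_k)\in\mathbb R^{V\times[k]}$ with $|b_j(v)|\le\deg(v)$ for all $v,j$, $\alpha\in(0,1/4]$ and an integer $T\ge1$. Set $w^1_{v,j,+}=w^1_{v,j,-}=1$. For $i=1,\dots,T$: (1) $\tilde w^i_{v,j,\circ}=w^i_{v,j,\circ}$ if $w^i_{v,j,\circ}\ge n$ and $0$ otherwise ($\circ\in\{+,-\}$); (2) $\tilde\phi^i_{v,j}=(\tilde w^i_{v,j,+}-\tilde w^i_{v,j,-})/\deg(v)$; (3) for each edge $(u,v)$ let $j^*$ maximize $|\tilde\phi^i_{u,j}-\tilde\phi^i_{v,j}|$ over $j\in[k]$ (ties arbitrary), set $f^i_{j^*}(u,v)=+1$ if $\tilde\phi^i_{u,j^*}>\tilde\phi^i_{v,j^*}$, $-1$ if $<$, $0$ otherwise, and $f^i_j(u,v)=0$ for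 $j\ne j^*$; (4) if $\sum_{j,v}\tilde\phi^i_{v,j}b_j(v)>\sum_{j,v}\tilde\phi^i_{v,j}(Bf^i_j)_v$, terminate (declaring infeasibility); (5) $r^i_{v,j}=(b_j(v)-(Bf^i_j)_v)/\deg(v)$; (6) $w^{i+1}_{v,j,+}=w^i_{v,j,+}(1+\alpha r^i_{v,j})$, $w^{i+1}_{v,j,-}=w^i_{v,j,-}(1-\alpha r^i_{v,j})$. If all $T$ rounds complete, output $\bar f_j=\frac1T\sum_{i=1}^Tf^i_j$ for each $j$. *)

theory Defs
  imports Complex_Main
begin

type_synonym 'a mcw = "('a \<Rightarrow> nat \<Rightarrow> real) \<times> ('a \<Rightarrow> nat \<Rightarrow> real)"

definition deg :: "('a \<times> 'a) set \<Rightarrow> 'a \<Rightarrow> nat" where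
  "deg E v = card {e \<in> E. fst e = v \<or> snd e = v}"

text \<open>(B f)_v for the incidence matrix B: column (u,w) has +1 at u, -1 at w.\<close>
definition incB :: "('a \<times> 'a) set \<Rightarrow> (('a \<times> 'a) \<Rightarrow> real) \<Rightarrow> 'a \<Rightarrow> real" where
  "incB E f v = (\<Sum>e\<in>E. (if fst e = v then f e else 0) - (if snd e = v then f e else 0))"

definition trunc :: "nat \<Rightarrow> real \<Rightarrow> real" where
  "trunc n x = (if real n \<le> x then x else 0)"

definition mc_phi :: "nat \<Rightarrow> ('a \<times> 'a) set \<Rightarrow> 'a mcw \<Rightarrow> 'a \<Rightarrow> nat \<Rightarrow> real" where
  "mc_phi n E w v j = (trunc n (fst w v j) - trunc n (snd w v j)) / real (deg E v)"

definition mc_flow :: "(('a \<times> 'a) \<Rightarrow> nat) \<Rightarrow> ('a \<Rightarrow> nat \<Rightarrow> real) \<Rightarrow> nat \<Rightarrow> ('a \<times> 'a) \<Rightarrow> real" where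
  "mc_flow s phi j e = (if j = s e then sgn (phi (fst e) j - phi (snd e) j) else 0)"

text \<open>Weights of Algorithm MC: mc_w ... i are the weights w^{i+1} (round i+1 of the paper);
  sel i is the tie-breaking choice j* used in paper round i+1.\<close>
fun mc_w :: "'a set \<Rightarrow> ('a \<times> 'a) set \<Rightarrow> ('a \<Rightarrow> nat \<Rightarrow> real) \<Rightarrow> real
    \<Rightarrow> (nat \<Rightarrow> ('a \<times> 'a) \<Rightarrow> nat) \<Rightarrow> nat \<Rightarrow> 'a mcw" where
  "mc_w V E b \<alpha> sel 0 = (\<lambda>v j. 1, \<lambda>v j. 1)"
| "mc_w V E b \<alpha> sel (Suc i) =
     (let w = mc_w V E b \<alpha> sel i;
          \<phi> = mc_phi (card V) E w;
          r = (\<lambda>v j. (b v j - incB E (mc_flow (sel i) \<phi> j) v) / real (deg E v))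
      in (\<lambda>v j. fst w v j * (1 + \<alpha> * r v j), \<lambda>v j. snd w v j * (1 - \<alpha> * r v j)))"

definition mc_phiR :: "'a set \<Rightarrow> ('a \<times> 'a) set \<Rightarrow> ('a \<Rightarrow> nat \<Rightarrow> real) \<Rightarrow> real
    \<Rightarrow> (nat \<Rightarrow> ('a \<times> 'a) \<Rightarrow> nat) \<Rightarrow> nat \<Rightarrow> 'a \<Rightarrow> nat \<Rightarrow> real" where
  "mc_phiR V E b \<alpha> sel i = mc_phi (card V) E (mc_w V E b \<alpha> sel i)"

definition mc_fR :: "'a set \<Rightarrow> ('a \<times> 'a) set \<Rightarrow> ('a \<Rightarrow> nat \<Rightarrow> real) \<Rightarrow> real
    \<Rightarrow> (nat \<Rightarrow> ('a \<times> 'a) \<Rightarrow> nat) \<Rightarrow> nat \<Rightarrow> nat \<Rightarrow> ('a \<times> 'a) \<Rightarrow> real" where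
  "mc_fR V E b \<alpha> sel i j = mc_flow (sel i) (mc_phiR V E b \<alpha> sel i) j"

end

theory Submission
  imports Defs
begin

lemma incB_alt: "incB E f v = (\<Sum>e\<in>E. ((if fst e = v then 1 else 0) - (if snd e = v then 1 else 0)) * f e)"
  unfolding incB_def by (intro sum.cong) auto

lemma incB_bound:
  assumes fin: "finite E" and f1: "\<And>e. \<bar>f e\<bar> \<le> 1"
  shows "\<bar>incB E f v\<bar> \<le> real (deg E v)"
proof -
  have "\<bar>incB E f v\<bar> \<le> (\<Sum>e\<in>E. \<bar>((if fst e = v then 1 else 0) - (if snd e = v then 1 else 0)) * f e\<bar>)"
    unfolding incB_alt by (rule sum_abs)
  also have "\<dots> \<le> (\<Sum>e\<in>E. (if fst e = v \<or> snd e = v then 1 else 0))"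
  proof (rule sum_mono)
    fix e assume "e \<in> E"
    have "\<bar>f e\<bar> \<le> 1" by (rule f1)
    then show "\<bar>((if fst e = v then 1 else 0) - (if snd e = v then 1 else 0)) * f e\<bar>
        \<le> (if fst e = v \<or> snd e = v then 1 else (0::real))"
      by (auto simp: abs_mult)
  qed
  also have "\<dots> = real (card {e \<in> E. fst e = v \<or> snd e = v})"
  proof -
    have "(\<Sum>e\<in>E. (if fst e = v \<or> snd e = v then 1 else (0::real))) = (\<Sum>e\<in>{e \<in> E. fst e = v \<or> snd e = v}. 1)"
      by (rule sum.inter_filter[OF fin, symmetric])
    then show ?thesis by simp
  qed
  finally show ?thesis unfolding deg_def .
qed

lemma mc_flow_bound: "\<bar>mc_flow s phi j e\<bar> \<le> 1"
  unfolding mc_flow_def by (auto simp: abs_sgn_eq)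

definition rr where
  "rr V E b \<alpha> sel i v j = (b v j - incB E (mc_fR V E b \<alpha> sel i j) v) / real (deg E v)"

lemma W_Suc:
  "fst (mc_w V E b \<alpha> sel (Suc i)) v j = fst (mc_w V E b \<alpha> sel i) v j * (1 + \<alpha> * rr V E b \<alpha> sel i v j)"
  "snd (mc_w V E b \<alpha> sel (Suc i)) v j = snd (mc_w V E b \<alpha> sel i) v j * (1 - \<alpha> * rr V E b \<alpha> sel i v j)"
  by (simp_all only: mc_w.simps Let_def rr_def mc_fR_def mc_phiR_def fst_conv snd_conv)

lemma rr_bound:
  assumes fin: "finite E" and d: "deg E v \<ge> 1" and bb: "\<bar>b v j\<bar> \<le> real (deg E v)"
  shows "\<bar>rr V E b \<alpha> sel i v j\<bar> \<le> 2"
proof -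
  have B: "\<bar>incB E (mc_fR V E b \<alpha> sel i j) v\<bar> \<le> real (deg E v)"
    by (rule incB_bound[OF fin]) (simp add: mc_fR_def mc_flow_bound)
  have dp: "real (deg E v) > 0" using d by simp
  have "\<bar>b v j - incB E (mc_fR V E b \<alpha> sel i j) v\<bar> \<le> 2 * real (deg E v)" using B bb by linarith
  then show ?thesis using dp unfolding rr_def abs_divide by (simp add: pos_divide_le_eq)
qed

lemma arr_bound:
  assumes fin: "finite E" and d: "deg E v \<ge> 1" and bb: "\<bar>b v j\<bar> \<le> real (deg E v)"
    and a: "0 < \<alpha>" "\<alpha> \<le> 1/4"
  shows "\<bar>\<alpha> * rr V E b \<alpha> sel i v j\<bar> \<le> 1/2"
proof -
  have "\<bar>\<alpha> * rr V E b \<alpha> sel i v j\<bar> = \<alpha> * \<bar>rr V E b \<alpha> sel i v j\<bar>" using a by (simp add: abs_mult)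
  also have "\<dots> \<le> (1/4) * 2" using rr_bound[where E=E and v=v and b=b and j=j, OF fin d bb, of V \<alpha> sel i] a
    by (intro mult_mono) auto
  finally show ?thesis by simp
qed

lemma W_pos:
  assumes fin: "finite E" and d: "deg E v \<ge> 1" and bb: "\<bar>b v j\<bar> \<le> real (deg E v)"
    and a: "0 < \<alpha>" "\<alpha> \<le> 1/4"
  shows "fst (mc_w V E b \<alpha> sel i) v j > 0 \<and> snd (mc_w V E b \<alpha> sel i) v j > 0"
proof (induction i)
  case 0 then show ?case by simp
next
  case (Suc i)
  have h: "\<bar>\<alpha> * rr V E b \<alpha> sel i v j\<bar> \<le> 1/2" by (rule arr_bound[where E=E and v=v and b=b and j=j, OF fin d bb a])
  have "1 + \<alpha> * rr V E b \<alpha> sel i v j > 0" "1 - \<alpha> * rr V E b \<alpha> sel i v j > 0" using h by linarith+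
  then show ?case unfolding W_Suc using Suc by simp
qed

lemma ln_lower_neg:
  fixes x :: real assumes "-(1/2) \<le> x" "x \<le> 0"
  shows "x - x^2 \<le> ln (1 + x)"
proof -
  let ?g = "\<lambda>t::real. ln (1 + t) - t + t^2"
  have "?g x \<ge> ?g 0"
  proof (rule DERIV_nonpos_imp_nonincreasing[OF assms(2)])
    fix t :: real assume t: "x \<le> t" "t \<le> 0"
    have pos: "1 + t > 0" using t assms by linarith
    have "DERIV ?g t :> 1 / (1 + t) - 1 + 2 * t"
      by (auto intro!: derivative_eq_intros simp: pos)
    moreover have "1 / (1 + t) - 1 + 2 * t \<le> 0"
    proof -
      have "1 / (1 + t) - 1 + 2 * t = t * (1 + 2*t) / (1 + t)" using pos by (simp add: field_simps power2_eq_square)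
      moreover have "t * (1 + 2*t) \<le> 0" using t assms by (intro mult_nonpos_nonneg) auto
      ultimately show ?thesis using pos by (simp add: divide_nonpos_pos)
    qed
    ultimately show "\<exists>y. DERIV ?g t :> y \<and> y \<le> 0" by blast
  qed
  then show ?thesis by simp
qed

lemma ln_lower:
  fixes x :: real assumes "\<bar>x\<bar> \<le> 1/2"
  shows "x - x^2 \<le> ln (1 + x)"
proof (cases "x \<ge> 0")
  case True thus ?thesis using ln_one_plus_pos_lower_bound[of x] assms by auto
next
  case False thus ?thesis using ln_lower_neg[of x] assms by auto
qed

lemma step_lower:
  fixes x r \<alpha> :: real
  assumes h: "\<bar>x\<bar> \<le> 1/2" and r: "\<bar>r\<bar> \<le> 2" and x: "x = \<alpha> * r" and a: "0 < \<alpha>"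
  shows "x - 4 * \<alpha>^2 \<le> ln (1 + x)"
proof -
  have "x^2 = \<alpha>^2 * r^2" unfolding x by (simp add: power2_eq_square algebra_simps)
  also have "\<dots> \<le> \<alpha>^2 * 4"
  proof (rule mult_left_mono)
    have "r^2 = \<bar>r\<bar>^2" by simp
    also have "\<dots> \<le> 2^2" using r by (intro power_mono) auto
    finally show "r^2 \<le> 4" by simp
  qed simp
  finally show ?thesis using ln_lower[OF h] by linarith
qed

lemma ln_W:
  assumes fin: "finite E" and d: "deg E v \<ge> 1" and bb: "\<bar>b v j\<bar> \<le> real (deg E v)"
    and a: "0 < \<alpha>" "\<alpha> \<le> 1/4"
  shows "\<alpha> * (\<Sum>l<i. rr V E b \<alpha> sel l v j) - 4 * \<alpha>^2 * i \<le> ln (fst (mc_w V E b \<alpha> sel i) v j)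
       \<and> - \<alpha> * (\<Sum>l<i. rr V E b \<alpha> sel l v j) - 4 * \<alpha>^2 * i \<le> ln (snd (mc_w V E b \<alpha> sel i) v j)"
proof (induction i)
  case 0 then show ?case by simp
next
  case (Suc i)
  let ?r = "rr V E b \<alpha> sel i v j"
  have h: "\<bar>\<alpha> * ?r\<bar> \<le> 1/2" by (rule arr_bound[where E=E and v=v and b=b and j=j, OF fin d bb a])
  have h': "\<bar>- \<alpha> * ?r\<bar> \<le> 1/2" using h by simp
  have rb: "\<bar>?r\<bar> \<le> 2" by (rule rr_bound[where E=E and v=v and b=b and j=j, OF fin d bb])
  have rb': "\<bar>-?r\<bar> \<le> 2" using rb by simp
  have l1: "\<alpha> * ?r - 4 * \<alpha>^2 \<le> ln (1 + \<alpha> * ?r)" by (rule step_lower[OF h rb refl a(1)])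
  have l2: "-\<alpha> * ?r - 4 * \<alpha>^2 \<le> ln (1 + - \<alpha> * ?r)" using step_lower[OF h' rb' _ a(1)] by simp
  have p1: "1 + \<alpha> * ?r > 0" "1 - \<alpha> * ?r > 0" using h by linarith+
  have pw: "fst (mc_w V E b \<alpha> sel i) v j > 0" "snd (mc_w V E b \<alpha> sel i) v j > 0"
    using W_pos[where E=E and v=v and b=b and j=j, OF fin d bb a] by auto
  have e1: "ln (fst (mc_w V E b \<alpha> sel (Suc i)) v j) = ln (fst (mc_w V E b \<alpha> sel i) v j) + ln (1 + \<alpha> * ?r)"
    unfolding W_Suc using p1 pw by (simp add: ln_mult)
  have e2: "ln (snd (mc_w V E b \<alpha> sel (Suc i)) v j) = ln (snd (mc_w V E b \<alpha> sel i) v j) + ln (1 + - \<alpha> * ?r)"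
    unfolding W_Suc using p1 pw by (simp add: ln_mult)
  define S where "S = (\<Sum>l<i. rr V E b \<alpha> sel l v j)"
  have s: "(\<Sum>l<Suc i. rr V E b \<alpha> sel l v j) = S + ?r" unfolding S_def by simp
  have q1: "\<alpha> * (S + ?r) - 4 * \<alpha>^2 * real (Suc i) = (\<alpha> * S - 4 * \<alpha>^2 * real i) + (\<alpha> * ?r - 4 * \<alpha>^2)"
    by (simp add: algebra_simps)
  have q2: "- \<alpha> * (S + ?r) - 4 * \<alpha>^2 * real (Suc i) = (- \<alpha> * S - 4 * \<alpha>^2 * real i) + (- \<alpha> * ?r - 4 * \<alpha>^2)"
    by (simp add: algebra_simps)
  have IH1: "\<alpha> * S - 4 * \<alpha>^2 * real i \<le> ln (fst (mc_w V E b \<alpha> sel i) v j)"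
   and IH2: "- \<alpha> * S - 4 * \<alpha>^2 * real i \<le> ln (snd (mc_w V E b \<alpha> sel i) v j)"
    using Suc.IH unfolding S_def by auto
  have G1: "\<alpha> * (S + ?r) - 4 * \<alpha>^2 * real (Suc i) \<le> ln (fst (mc_w V E b \<alpha> sel (Suc i)) v j)"
    using q1 add_mono[OF IH1 l1] e1 by simp
  have G2: "- \<alpha> * (S + ?r) - 4 * \<alpha>^2 * real (Suc i) \<le> ln (snd (mc_w V E b \<alpha> sel (Suc i)) v j)"
    using q2 add_mono[OF IH2 l2] e2 by simp
  show ?case using G1 G2 s by simp
qed


lemma incB_lin:
  "incB E (\<lambda>e. c * (\<Sum>i\<in>I. f i e)) v = c * (\<Sum>i\<in>I. incB E (f i) v)"
proof -
  let ?a = "\<lambda>e. ((if fst e = v then 1 else 0) - (if snd e = v then 1 else 0)) :: real"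
  have "incB E (\<lambda>e. c * (\<Sum>i\<in>I. f i e)) v = (\<Sum>e\<in>E. \<Sum>i\<in>I. c * (?a e * f i e))"
    unfolding incB_alt by (intro sum.cong refl) (simp add: sum_distrib_left mult_ac)
  also have "\<dots> = (\<Sum>i\<in>I. \<Sum>e\<in>E. c * (?a e * f i e))" by (rule sum.swap)
  also have "\<dots> = c * (\<Sum>i\<in>I. incB E (f i) v)"
    unfolding incB_alt by (simp add: sum_distrib_left)
  finally show ?thesis .
qed

lemma trunc_res:
  assumes "0 < x" shows "0 \<le> x - trunc n x \<and> x - trunc n x \<le> real n"
  using assms unfolding trunc_def by auto

lemma term_step:
  assumes fin: "finite E" and d: "deg E v \<ge> 1" and bb: "\<bar>b v j\<bar> \<le> real (deg E v)"
    and a: "0 < \<alpha>" "\<alpha> \<le> 1/4"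
  shows "fst (mc_w V E b \<alpha> sel (Suc i)) v j + snd (mc_w V E b \<alpha> sel (Suc i)) v j
     \<le> fst (mc_w V E b \<alpha> sel i) v j + snd (mc_w V E b \<alpha> sel i) v j
       + \<alpha> * (mc_phiR V E b \<alpha> sel i v j * b v j - mc_phiR V E b \<alpha> sel i v j * incB E (mc_fR V E b \<alpha> sel i j) v)
       + \<alpha> * (2 * real (card V))"
proof -
  define f where "f = fst (mc_w V E b \<alpha> sel i) v j"
  define s where "s = snd (mc_w V E b \<alpha> sel i) v j"
  define r where "r = rr V E b \<alpha> sel i v j"
  define \<phi> where "\<phi> = mc_phiR V E b \<alpha> sel i v j"
  define B where "B = incB E (mc_fR V E b \<alpha> sel i j) v"
  define n where "n = card V"
  define dd where "dd = real (deg E v)"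
  have dp: "dd > 0" using d unfolding dd_def by simp
  have pw: "f > 0" "s > 0" unfolding f_def s_def
    using W_pos[where E=E and v=v and b=b and j=j, OF fin d bb a] by auto
  have phi_eq: "\<phi> = (trunc n f - trunc n s) / dd"
    unfolding \<phi>_def mc_phiR_def mc_phi_def f_def s_def n_def dd_def by simp
  have r_eq: "r = (b v j - B) / dd" unfolding r_def rr_def B_def dd_def by simp
  have key: "(trunc n f - trunc n s) * r = \<phi> * b v j - \<phi> * B"
    unfolding phi_eq r_eq using dp by (simp add: field_simps)
  have rb: "\<bar>r\<bar> \<le> 2" unfolding r_def by (rule rr_bound[where E=E and v=v and b=b and j=j, OF fin d bb])
  have t1: "0 \<le> f - trunc n f \<and> f - trunc n f \<le> real n" by (rule trunc_res[OF pw(1)])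
  have t2: "0 \<le> s - trunc n s \<and> s - trunc n s \<le> real n" by (rule trunc_res[OF pw(2)])
  have res: "\<bar>((f - trunc n f) - (s - trunc n s)) * r\<bar> \<le> real n * 2"
    unfolding abs_mult using t1 t2 rb by (intro mult_mono) auto
  have split: "(f - s) * r = (trunc n f - trunc n s) * r + ((f - trunc n f) - (s - trunc n s)) * r"
    by (simp add: algebra_simps)
  have new: "fst (mc_w V E b \<alpha> sel (Suc i)) v j + snd (mc_w V E b \<alpha> sel (Suc i)) v j = f + s + \<alpha> * ((f - s) * r)"
    unfolding W_Suc f_def s_def r_def by (simp add: algebra_simps)
  have "\<alpha> * (((f - trunc n f) - (s - trunc n s)) * r) \<le> \<alpha> * (2 * real n)"
    using res a by (intro mult_left_mono) auto
  then have "f + s + \<alpha> * ((f - s) * r) \<le> f + s + \<alpha> * (\<phi> * b v j - \<phi> * B) + \<alpha> * (2 * real n)"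
    unfolding split key by (simp add: algebra_simps)
  then show ?thesis unfolding new f_def[symmetric] s_def[symmetric] \<phi>_def[symmetric] B_def[symmetric] n_def[symmetric] .
qed

definition Phi where
  "Phi V E b \<alpha> sel k i = (\<Sum>j<k. \<Sum>v\<in>V. fst (mc_w V E b \<alpha> sel i) v j + snd (mc_w V E b \<alpha> sel i) v j)"


lemma Phi_step:
  assumes fin: "finite E" and finV: "finite V" and degpos: "\<forall>v\<in>V. deg E v \<ge> 1"
    and bbound: "\<forall>v\<in>V. \<forall>j<k. \<bar>b v j\<bar> \<le> real (deg E v)"
    and a: "0 < \<alpha>" "\<alpha> \<le> 1/4"
    and nt: "(\<Sum>j<k. \<Sum>v\<in>V. mc_phiR V E b \<alpha> sel i v j * b v j)
        \<le> (\<Sum>j<k. \<Sum>v\<in>V. mc_phiR V E b \<alpha> sel i v j * incB E (mc_fR V E b \<alpha> sel i j) v)"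
  shows "Phi V E b \<alpha> sel k (Suc i) \<le> Phi V E b \<alpha> sel k i + \<alpha> * (real k * real (card V) * (2 * real (card V)))"
proof -
  let ?X = "(\<Sum>j<k. \<Sum>v\<in>V. mc_phiR V E b \<alpha> sel i v j * b v j)"
  let ?Y = "(\<Sum>j<k. \<Sum>v\<in>V. mc_phiR V E b \<alpha> sel i v j * incB E (mc_fR V E b \<alpha> sel i j) v)"
  have "Phi V E b \<alpha> sel k (Suc i) \<le> (\<Sum>j<k. \<Sum>v\<in>V. (fst (mc_w V E b \<alpha> sel i) v j + snd (mc_w V E b \<alpha> sel i) v j)
       + \<alpha> * (mc_phiR V E b \<alpha> sel i v j * b v j - mc_phiR V E b \<alpha> sel i v j * incB E (mc_fR V E b \<alpha> sel i j) v)
       + \<alpha> * (2 * real (card V)))"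
    unfolding Phi_def
  proof (intro sum_mono)
    fix j v assume j: "j \<in> {..<k}" and v: "v \<in> V"
    show "fst (mc_w V E b \<alpha> sel (Suc i)) v j + snd (mc_w V E b \<alpha> sel (Suc i)) v j
     \<le> fst (mc_w V E b \<alpha> sel i) v j + snd (mc_w V E b \<alpha> sel i) v j
       + \<alpha> * (mc_phiR V E b \<alpha> sel i v j * b v j - mc_phiR V E b \<alpha> sel i v j * incB E (mc_fR V E b \<alpha> sel i j) v)
       + \<alpha> * (2 * real (card V))"
      by (rule term_step[OF fin]) (use j v degpos bbound a in auto)
  qed
  also have "\<dots> = Phi V E b \<alpha> sel k i + \<alpha> * (?X - ?Y) + real k * (real (card V) * (\<alpha> * (2 * real (card V))))"
  proof -
    have e: "(\<Sum>j<k. \<Sum>v\<in>V. \<alpha> * (mc_phiR V E b \<alpha> sel i v j * b v j - mc_phiR V E b \<alpha> sel i v j * incB E (mc_fR V E b \<alpha> sel i j) v)) = \<alpha> * (?X - ?Y)"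
      by (simp add: sum_subtractf sum_distrib_left right_diff_distrib)
    have c: "(\<Sum>j<k. \<Sum>v\<in>V. \<alpha> * (2 * real (card V))) = real k * (real (card V) * (\<alpha> * (2 * real (card V))))"
      by simp
    show ?thesis unfolding Phi_def sum.distrib e c ..
  qed
  also have "\<dots> \<le> Phi V E b \<alpha> sel k i + \<alpha> * (real k * real (card V) * (2 * real (card V)))"
  proof -
    have "\<alpha> * (?X - ?Y) \<le> 0" using nt a by (intro mult_nonneg_nonpos) auto
    then show ?thesis by (simp add: mult_ac)
  qed
  finally show ?thesis .
qed


lemma Phi_bound:
  assumes fin: "finite E" and finV: "finite V" and degpos: "\<forall>v\<in>V. deg E v \<ge> 1"
    and bbound: "\<forall>v\<in>V. \<forall>j<k. \<bar>b v j\<bar> \<le> real (deg E v)"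
    and a: "0 < \<alpha>" "\<alpha> \<le> 1/4"
    and nt: "\<forall>i<T. (\<Sum>j<k. \<Sum>v\<in>V. mc_phiR V E b \<alpha> sel i v j * b v j)
        \<le> (\<Sum>j<k. \<Sum>v\<in>V. mc_phiR V E b \<alpha> sel i v j * incB E (mc_fR V E b \<alpha> sel i j) v)"
  shows "i \<le> T \<Longrightarrow> Phi V E b \<alpha> sel k i \<le> 2 * real (card V) * real k + real i * (\<alpha> * (real k * real (card V) * (2 * real (card V))))"
proof (induction i)
  case 0 show ?case by (simp add: Phi_def)
next
  case (Suc i)
  then have iT: "i < T" by simp
  have "Phi V E b \<alpha> sel k (Suc i) \<le> Phi V E b \<alpha> sel k i + \<alpha> * (real k * real (card V) * (2 * real (card V)))"
    by (rule Phi_step[OF fin finV degpos bbound a]) (use nt iT in auto)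
  then show ?case using Suc.IH iT by (simp add: algebra_simps)
qed

theorem lemma2p12:
  fixes V :: "'a set" and E :: "('a \<times> 'a) set" and b :: "'a \<Rightarrow> nat \<Rightarrow> real"
    and k T :: nat and \<alpha> :: real and sel :: "nat \<Rightarrow> ('a \<times> 'a) \<Rightarrow> nat"
  assumes finV: "finite V" and n3: "card V \<ge> 3"
    and EV: "E \<subseteq> V \<times> V"
    and simple: "\<forall>(u, w) \<in> E. u \<noteq> w \<and> (w, u) \<notin> E"
    and degpos: "\<forall>v\<in>V. deg E v \<ge> 1"
    and k1: "k \<ge> 1"
    and bbound: "\<forall>v\<in>V. \<forall>j<k. \<bar>b v j\<bar> \<le> real (deg E v)"
    and alpha: "0 < \<alpha>" "\<alpha> \<le> 1/4"
    and T1: "T \<ge> 1"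
    and Tbig: "\<alpha>^2 * real T \<ge> ln (2 * real (card V) * real k + 5 * real T * real k * real (card V)^2)"
    and sel_ok: "\<forall>i<T. \<forall>e\<in>E. sel i e < k \<and>
        (\<forall>j<k. \<bar>mc_phiR V E b \<alpha> sel i (fst e) j - mc_phiR V E b \<alpha> sel i (snd e) j\<bar>
           \<le> \<bar>mc_phiR V E b \<alpha> sel i (fst e) (sel i e) - mc_phiR V E b \<alpha> sel i (snd e) (sel i e)\<bar>)"
    and no_term: "\<forall>i<T. (\<Sum>j<k. \<Sum>v\<in>V. mc_phiR V E b \<alpha> sel i v j * b v j)
        \<le> (\<Sum>j<k. \<Sum>v\<in>V. mc_phiR V E b \<alpha> sel i v j * incB E (mc_fR V E b \<alpha> sel i j) v)"
  shows "\<forall>v\<in>V. \<forall>j<k.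
     \<bar>b v j - incB E (\<lambda>e. (1 / real T) * (\<Sum>i<T. mc_fR V E b \<alpha> sel i j e)) v\<bar>
       \<le> 5 * \<alpha> * real (deg E v)"
proof (intro ballI allI impI)
  fix v j assume v: "v \<in> V" and j: "j < k"
  have finE: "finite E" using finite_subset[OF EV] finV by auto
  have d: "deg E v \<ge> 1" using degpos v by auto
  have bb: "\<bar>b v j\<bar> \<le> real (deg E v)" using bbound v j by auto
  define n where "n = real (card V)"
  define S where "S = (\<Sum>l<T. rr V E b \<alpha> sel l v j)"
  define P where "P = Phi V E b \<alpha> sel k T"
  define M where "M = 2 * n * real k + 5 * real T * real k * n^2"
  have lw: "\<alpha> * S - 4 * \<alpha>^2 * T \<le> ln (fst (mc_w V E b \<alpha> sel T) v j)"
     "- \<alpha> * S - 4 * \<alpha>^2 * T \<le> ln (snd (mc_w V E b \<alpha> sel T) v j)"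
    using ln_W[where E=E and v=v and b=b and j=j, OF finE d bb alpha, of V sel T] unfolding S_def by auto
  have pos: "\<And>v' j'. v' \<in> V \<Longrightarrow> j' < k \<Longrightarrow> fst (mc_w V E b \<alpha> sel T) v' j' > 0 \<and> snd (mc_w V E b \<alpha> sel T) v' j' > 0"
  proof -
    fix v' j' assume "v' \<in> V" "j' < k"
    then have "deg E v' \<ge> 1" "\<bar>b v' j'\<bar> \<le> real (deg E v')" using degpos bbound by auto
    then show "fst (mc_w V E b \<alpha> sel T) v' j' > 0 \<and> snd (mc_w V E b \<alpha> sel T) v' j' > 0"
      using W_pos[OF finE _ _ alpha] by blast
  qed
  have nn: "\<forall>x\<in>{..<k} - {j}. 0 \<le> (\<Sum>v'\<in>V. fst (mc_w V E b \<alpha> sel T) v' x + snd (mc_w V E b \<alpha> sel T) v' x)"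
  proof
    fix x assume "x \<in> {..<k} - {j}"
    then have x: "x < k" by simp
    show "0 \<le> (\<Sum>v'\<in>V. fst (mc_w V E b \<alpha> sel T) v' x + snd (mc_w V E b \<alpha> sel T) v' x)"
    proof (rule sum_nonneg)
      fix v' assume "v' \<in> V"
      with pos[OF this x] show "0 \<le> fst (mc_w V E b \<alpha> sel T) v' x + snd (mc_w V E b \<alpha> sel T) v' x" by linarith
    qed
  qed
  have inner: "fst (mc_w V E b \<alpha> sel T) v j + snd (mc_w V E b \<alpha> sel T) v j
      \<le> (\<Sum>v'\<in>V. fst (mc_w V E b \<alpha> sel T) v' j + snd (mc_w V E b \<alpha> sel T) v' j)"
    by (rule member_le_sum[OF v _ finV]) (use pos j in \<open>auto intro: add_nonneg_nonneg less_imp_le\<close>)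
  also have "\<dots> \<le> P"
    unfolding P_def Phi_def
    by (rule member_le_sum[of j "{..<k}" "\<lambda>j. \<Sum>v'\<in>V. fst (mc_w V E b \<alpha> sel T) v' j + snd (mc_w V E b \<alpha> sel T) v' j"])
       (use j in simp, use nn in simp, simp)
  finally have sumP: "fst (mc_w V E b \<alpha> sel T) v j + snd (mc_w V E b \<alpha> sel T) v j \<le> P" .
  have pv: "fst (mc_w V E b \<alpha> sel T) v j > 0" "snd (mc_w V E b \<alpha> sel T) v j > 0" using pos v j by auto
  have PM: "P \<le> M"
  proof -
    have "P \<le> 2 * n * real k + real T * (\<alpha> * (real k * n * (2 * n)))"
      unfolding P_def n_def by (rule Phi_bound[OF finE finV degpos bbound alpha no_term]) simp
    also have "\<dots> \<le> M"
    proof -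
      have "real T * (\<alpha> * (real k * n * (2 * n))) = (2 * \<alpha>) * (real T * real k * n^2)"
        by (simp add: power2_eq_square mult_ac)
      also have "\<dots> \<le> 5 * (real T * real k * n^2)"
        using alpha by (intro mult_right_mono) auto
      finally show ?thesis unfolding M_def by simp
    qed
    finally show ?thesis .
  qed
  have lnM: "ln M \<le> \<alpha>^2 * T" using Tbig unfolding M_def n_def by simp
  have f1: "ln (fst (mc_w V E b \<alpha> sel T) v j) \<le> \<alpha>^2 * T"
  proof -
    have "fst (mc_w V E b \<alpha> sel T) v j \<le> M" using sumP PM pv by linarith
    then have "ln (fst (mc_w V E b \<alpha> sel T) v j) \<le> ln M" using pv by (intro ln_mono) auto
    then show ?thesis using lnM by linarith
  qed
  have f2: "ln (snd (mc_w V E b \<alpha> sel T) v j) \<le> \<alpha>^2 * T"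
  proof -
    have "snd (mc_w V E b \<alpha> sel T) v j \<le> M" using sumP PM pv by linarith
    then have "ln (snd (mc_w V E b \<alpha> sel T) v j) \<le> ln M" using pv by (intro ln_mono) auto
    then show ?thesis using lnM by linarith
  qed
  have "\<alpha> * S \<le> \<alpha> * (5 * \<alpha> * T)" using lw(1) f1 by (simp add: power2_eq_square algebra_simps)
  then have S1: "S \<le> 5 * \<alpha> * T" using alpha(1) by (simp add: mult_le_cancel_left_pos)
  have "\<alpha> * (- S) \<le> \<alpha> * (5 * \<alpha> * T)" using lw(2) f2 by (simp add: power2_eq_square algebra_simps)
  then have S2: "- S \<le> 5 * \<alpha> * T" using alpha(1) mult_le_cancel_left_pos[of \<alpha> "- S" "5 * \<alpha> * T"] by blast
  have Sabs: "\<bar>S\<bar> \<le> 5 * \<alpha> * T" using S1 S2 by linarith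
  define dd where "dd = real (deg E v)"
  have dp: "dd > 0" using d unfolding dd_def by simp
  have Tp: "real T > 0" using T1 by simp
  define Bs where "Bs = (\<Sum>i<T. incB E (mc_fR V E b \<alpha> sel i j) v)"
  have S_eq: "S = (real T * b v j - Bs) / dd"
    unfolding S_def rr_def Bs_def dd_def by (simp add: sum_divide_distrib[symmetric] sum_subtractf)
  have lin: "incB E (\<lambda>e. (1 / real T) * (\<Sum>i<T. mc_fR V E b \<alpha> sel i j e)) v = (1 / real T) * Bs"
    unfolding Bs_def by (rule incB_lin)
  have "b v j - (1 / real T) * Bs = dd * S / real T"
    unfolding S_eq using dp Tp by (simp add: field_simps)
  then have "\<bar>b v j - incB E (\<lambda>e. (1 / real T) * (\<Sum>i<T. mc_fR V E b \<alpha> sel i j e)) v\<bar> = dd * \<bar>S\<bar> / real T"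
    unfolding lin using dp Tp by (simp add: abs_mult)
  also have "\<dots> \<le> dd * (5 * \<alpha> * T) / real T"
    using Sabs dp Tp by (intro divide_right_mono mult_left_mono) auto
  also have "\<dots> = 5 * \<alpha> * dd" using Tp by simp
  finally show "\<bar>b v j - incB E (\<lambda>e. (1 / real T) * (\<Sum>i<T. mc_fR V E b \<alpha> sel i j e)) v\<bar> \<le> 5 * \<alpha> * real (deg E v)"
    unfolding dd_def .
qed

end
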